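(* Let $T_0$ be a Steiner tree of the regular $d$-simplex, and let $\{T_k\}_{k\ge 0}$ be the sequence of Steiner trees of regular simplices obtained by repeatedly applying the doubling procedure to $T_0$ (so $T_k$ is a Steiner tree of the regular $2^kd$-simplex). Let $\ell_k$ denote the Steiner ratio of $T_k$, i.e. the cost of $T_k$ divided by the cost $(2^kd-1)\sqrt2$ of a minimum spanning tree of its terminals. If $\lim_{k\to\infty}\ell_k$ exists, then \[\lim_{k\to\infty}\ell_k=\frac{\sqrt3}{\sqrt2\,(2\sqrt2-1)}.\]
   Context: The regular $n$-simplex refers to the terminal set of standard basis vectors $\mathbf{e_1},\dots,\mathbf{e_n}\in\mathbb{R}^n$ (pairwise distance $\sqrt2$). A Steiner tree of a finite terminal set $P$ is a tree with vertex set $P\cup S$, $S$ a finite set of Steiner points, with Euclidean edge lengths; its cost is its total length. For $\mathbf{x}\in\mathbb{R}^m$, the split of $\mathbf{x}$ is $\left(\frac{x_1}{2},\frac{x_1}{2},\dots,\frac{x_m}{2},\frac{x_m}{2}\right)\in\mathbb{R}^{2m}$. The Fermat point of a triangle with all angles less than $120^\circ$ is the interior point at which each pair of vertices subtends $120^\circ$. Doubling procedure: given a Steiner tree $T$ of the regular $m$-simplex with Steiner point set $S$ in which each terminal is a leaf adjacent to a Steiner point, form $T'$ on terminals $\mathbf{e_1},\dots,\mathbf{e_{2m}}\in\mathbb{R}^{2m}$ by (1) taking the split $\mathbf{s'}$ of each $\mathbf{s}\in S$ as a Steiner point; (2) joining $\mathbf{r'},\mathbf{s'}$ whenever $\mathbf{r},\mathbf{s}\in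 S$ are adjacent in $T$; (3) for each terminal $\mathbf{e_i}$ of $T$ with adjacent Steiner point $\mathbf{s_i}$, adding the Fermat point $\mathbf{x_i}$ of the triangle $\mathbf{e_{2i-1}}\mathbf{e_{2i}}\mathbf{s'_i}$ as a Steiner point; (4) adding edges $(\mathbf{e_{2i-1}},\mathbf{x_i}),(\mathbf{e_{2i}},\mathbf{x_i}),(\mathbf{x_i},\mathbf{s'_i})$. It is implicitly assumed that $T_0$ is such that the procedure can be applied repeatedly (all required Fermat points exist). *)

theory Defs
  imports Complex_Main
begin

text \<open>Points of R^n are represented as functions nat => real; only the
coordinates 0..n-1 are used (indices are 0-based, so the paper's e_i is basis (i-1)).\<close>

type_synonym point = "nat \<Rightarrow> real"

text \<open>Vertices of a Steiner tree: Inl i is the terminal e_i, Inr j is the j-th Steiner point.\<close>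
type_synonym vtx = "nat + nat"

record stree =
  dim :: nat                      \<comment> \<open>number of terminals = ambient dimension\<close>
  nst :: nat
  spt :: "nat \<Rightarrow> point"
  edges :: "(vtx \<times> vtx) set"     \<comment> \<open>each undirected edge listed once, in some orientation\<close>

definition basis :: "nat \<Rightarrow> point" where
  "basis i = (\<lambda>j. if j = i then 1 else 0)"

definition ip :: "nat \<Rightarrow> point \<Rightarrow> point \<Rightarrow> real" where
  "ip n x y = (\<Sum>i<n. x i * y i)"

definition enorm :: "nat \<Rightarrow> point \<Rightarrow> real" where
  "enorm n x = sqrt (ip n x x)"

definition edist :: "nat \<Rightarrow> point \<Rightarrow> point \<Rightarrow> real" where
  "edist n x y = enorm n (\<lambda>i. x i - y i)"

definition verts :: "stree \<Rightarrow> vtx set" where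
  "verts T = Inl ` {..<dim T} \<union> Inr ` {..<nst T}"

definition vpos :: "stree \<Rightarrow> vtx \<Rightarrow> point" where
  "vpos T v = (case v of Inl i \<Rightarrow> basis i | Inr j \<Rightarrow> spt T j)"

definition adj :: "stree \<Rightarrow> vtx \<Rightarrow> vtx \<Rightarrow> bool" where
  "adj T u v \<longleftrightarrow> (u, v) \<in> edges T \<or> (v, u) \<in> edges T"

definition is_steiner_tree :: "stree \<Rightarrow> bool" where
  "is_steiner_tree T \<longleftrightarrow>
     (\<forall>j<nst T. \<forall>i\<ge>dim T. spt T j i = 0) \<and>
     finite (edges T) \<and> edges T \<subseteq> verts T \<times> verts T \<and>
     (\<forall>u v. (u, v) \<in> edges T \<longrightarrow> u \<noteq> v \<and> (v, u) \<notin> edges T) \<and>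
     (\<forall>u\<in>verts T. \<forall>v\<in>verts T. (u, v) \<in> (edges T \<union> (edges T)\<inverse>)\<^sup>*) \<and>
     card (edges T) + 1 = card (verts T)"

definition cost :: "stree \<Rightarrow> real" where
  "cost T = (\<Sum>(u, v)\<in>edges T. edist (dim T) (vpos T u) (vpos T v))"

definition steiner_ratio :: "stree \<Rightarrow> real" where
  "steiner_ratio T = cost T / ((real (dim T) - 1) * sqrt 2)"

definition terminals_leaves :: "stree \<Rightarrow> bool" where
  "terminals_leaves T \<longleftrightarrow>
     (\<forall>i<dim T. \<exists>j<nst T. \<forall>v. adj T (Inl i) v \<longleftrightarrow> v = Inr j)"

definition sadj :: "stree \<Rightarrow> nat \<Rightarrow> nat" where
  "sadj T i = (THE j. adj T (Inl i) (Inr j))"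

definition split :: "nat \<Rightarrow> point \<Rightarrow> point" where
  "split m x = (\<lambda>j. if j < 2 * m then x (j div 2) / 2 else 0)"

text \<open>x is the Fermat point of triangle abc in R^n: each pair of vertices subtends
120 degrees at x (cosine of the angle equals -1/2).\<close>
definition fermat_point :: "nat \<Rightarrow> point \<Rightarrow> point \<Rightarrow> point \<Rightarrow> point \<Rightarrow> bool" where
  "fermat_point n a b c x \<longleftrightarrow>
     (let u = (\<lambda>i. a i - x i); v = (\<lambda>i. b i - x i); w = (\<lambda>i. c i - x i) in
       enorm n u \<noteq> 0 \<and> enorm n v \<noteq> 0 \<and> enorm n w \<noteq> 0 \<and>
       ip n u v = - (1/2) * enorm n u * enorm n v \<and>
       ip n v w = - (1/2) * enorm n v * enorm n w \<and>
       ip n w u = - (1/2) * enorm n w * enorm n u)"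

text \<open>Steiner points of T' are
numbered: j < nst T is the split of Steiner point j of T; nst T + i is the Fermat
point x_i belonging to terminal i of T.  Terminals 2i, 2i+1 of T' replace terminal i.\<close>
definition is_doubling :: "stree \<Rightarrow> stree \<Rightarrow> bool" where
  "is_doubling T T' \<longleftrightarrow>
     terminals_leaves T \<and>
     dim T' = 2 * dim T \<and> nst T' = nst T + dim T \<and>
     (\<forall>j<nst T. spt T' j = split (dim T) (spt T j)) \<and>
     (\<forall>i<dim T. fermat_point (dim T') (basis (2 * i)) (basis (2 * i + 1))
                  (split (dim T) (spt T (sadj T i))) (spt T' (nst T + i))) \<and>
     edges T' = {(Inr a, Inr b) | a b. (Inr a, Inr b) \<in> edges T} \<union>
       (\<Union>i<dim T. {(Inl (2 * i), Inr (nst T + i)), (Inl (2 * i + 1), Inr (nst T + i)),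
                    (Inr (nst T + i), Inr (sadj T i))})"

end

theory Submission
  imports Defs
begin

lemma ip_sym: "ip n x y = ip n y x"
  unfolding ip_def by (simp add: mult.commute)

lemma ip_self_nonneg: "ip n x x \<ge> 0"
  unfolding ip_def by (auto intro: sum_nonneg)

lemma enorm_sq: "(enorm n x)^2 = ip n x x"
  unfolding enorm_def using ip_self_nonneg[of n x] by simp

lemma enorm_nonneg: "enorm n x \<ge> 0"
  unfolding enorm_def using ip_self_nonneg[of n x] by simp

lemma ip_diff_diff:
  "ip n (\<lambda>i. f i - g i) (\<lambda>i. f i - g i) = ip n f f - 2 * ip n f g + ip n g g"
proof -
  have "ip n (\<lambda>i. f i - g i) (\<lambda>i. f i - g i) = (\<Sum>i<n. f i * f i - 2 * (f i * g i) + g i * g i)"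
    unfolding ip_def by (intro sum.cong) (auto simp: algebra_simps)
  also have "\<dots> = ip n f f - 2 * ip n f g + ip n g g"
    unfolding ip_def by (simp add: sum.distrib sum_subtractf sum_distrib_left)
  finally show ?thesis .
qed

lemma edist_sym: "edist n x y = edist n y x"
proof -
  have "ip n (\<lambda>i. x i - y i) (\<lambda>i. x i - y i) = ip n (\<lambda>i. y i - x i) (\<lambda>i. y i - x i)"
    unfolding ip_def by (intro sum.cong) (auto simp: algebra_simps)
  then show ?thesis unfolding edist_def enorm_def by simp
qed

lemma sum_2m: "(\<Sum>j<2*m. f j) = (\<Sum>i<m. f (2*i) + f (2*i+1))" for f :: "nat \<Rightarrow> real"
  by (induction m) (auto simp: lessThan_Suc)

lemma ip_split: "ip (2*m) (split m x) (split m y) = ip m x y / 2"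
proof -
  have "ip (2*m) (split m x) (split m y) = (\<Sum>i<m. x i * y i / 2)"
    unfolding ip_def sum_2m by (intro sum.cong) (auto simp: split_def)
  then show ?thesis unfolding ip_def by (simp add: sum_divide_distrib)
qed

lemma ip_basis: "j < n \<Longrightarrow> ip n (basis j) y = y j"
proof -
  assume "j < n"
  have "ip n (basis j) y = (\<Sum>i<n. if i = j then y i else 0)"
    unfolding ip_def basis_def by (intro sum.cong) auto
  then show ?thesis using \<open>j < n\<close> by simp
qed

lemma split_diff: "(\<lambda>i. split m x i - split m y i) = split m (\<lambda>i. x i - y i)"
  by (auto simp: split_def fun_eq_iff diff_divide_distrib)

lemma edist_split: "edist (2*m) (split m x) (split m y) = edist m x y / sqrt 2"
  unfolding edist_def enorm_def split_diff ip_split by (simp add: real_sqrt_divide)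

lemma split_at: "i < m \<Longrightarrow> split m s (2*i) = s i / 2" "i < m \<Longrightarrow> split m s (2*i+1) = s i / 2"
  by (auto simp: split_def)


lemma fermat_lengths:
  assumes im: "i < m"
    and F: "fermat_point (2*m) (basis (2*i)) (basis (2*i+1)) (split m s) x"
  shows "edist (2*m) (basis (2*i)) x = sqrt (2/3)"
    and "edist (2*m) (basis (2*i+1)) x = sqrt (2/3)"
    and "edist (2*m) x (split m s) = (sqrt 2 * edist m (basis i) s - sqrt (2/3)) / 2"
proof -
  define a where "a = basis (2*i)"
  define b where "b = basis (2*i+1)"
  define c where "c = split m s"
  define u where "u = (\<lambda>j. a j - x j)"
  define v where "v = (\<lambda>j. b j - x j)"
  define w where "w = (\<lambda>j. c j - x j)"
  define p where "p = enorm (2*m) u"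
  define q where "q = enorm (2*m) v"
  define r where "r = enorm (2*m) w"
  define t where "t = edist m (basis i) s"
  define S where "S = ip m s s"
  have Fu: "p \<noteq> 0" "q \<noteq> 0" "r \<noteq> 0" "ip (2*m) u v = - (1/2) * p * q"
     "ip (2*m) v w = - (1/2) * q * r" "ip (2*m) w u = - (1/2) * r * p"
    using F unfolding fermat_point_def Let_def a_def b_def c_def u_def v_def w_def p_def q_def r_def
    by auto
  have pp: "p > 0" "q > 0" "r > 0" using Fu enorm_nonneg unfolding p_def q_def r_def
    by (auto simp: less_le)
  have sq: "ip (2*m) u u = p^2" "ip (2*m) v v = q^2" "ip (2*m) w w = r^2"
    unfolding p_def q_def r_def by (simp_all add: enorm_sq)
  have i1: "2*i < 2*m" "2*i+1 < 2*m" using im by auto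
  have uv: "(\<lambda>j. u j - v j) = (\<lambda>j. a j - b j)" unfolding u_def v_def by auto
  have uw: "(\<lambda>j. u j - w j) = (\<lambda>j. a j - c j)" unfolding u_def w_def by auto
  have vw: "(\<lambda>j. v j - w j) = (\<lambda>j. b j - c j)" unfolding v_def w_def by auto
  have ab: "ip (2*m) (\<lambda>j. a j - b j) (\<lambda>j. a j - b j) = 2"
    unfolding ip_diff_diff a_def b_def using i1
    by (simp add: ip_basis ip_sym[of _ _ "basis (2*i+1)"]) (simp add: basis_def)
  have ac: "ip (2*m) (\<lambda>j. a j - c j) (\<lambda>j. a j - c j) = 1 - s i + S / 2"
    unfolding ip_diff_diff a_def c_def S_def using i1 im
    by (simp add: ip_basis ip_split split_at) (simp add: basis_def)
  have bc1: "ip (2*m) b c = s i / 2"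
  proof -
    have "ip (2*m) (basis (2*i+1)) (split m s) = split m s (2*i+1)" using i1(2) by (rule ip_basis)
    also have "\<dots> = s i / 2" using im by (rule split_at)
    finally show ?thesis unfolding b_def c_def .
  qed
  have bc2: "ip (2*m) b b = 1" unfolding b_def using i1 by (simp only: ip_basis) (simp add: basis_def)
  have bc: "ip (2*m) (\<lambda>j. b j - c j) (\<lambda>j. b j - c j) = 1 - s i + S / 2"
    using bc1 bc2 unfolding ip_diff_diff c_def S_def ip_split by simp
  have tt: "t^2 = 1 - 2 * s i + S"
  proof -
    have "t^2 = ip m (\<lambda>j. basis i j - s j) (\<lambda>j. basis i j - s j)"
      unfolding t_def edist_def enorm_sq ..
    also have "\<dots> = ip m (basis i) (basis i) - 2 * ip m (basis i) s + ip m s s"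
      by (rule ip_diff_diff)
    also have "ip m (basis i) (basis i) = basis i i" using im by (rule ip_basis)
    also have "basis i i = 1" by (simp add: basis_def)
    also have "ip m (basis i) s = s i" using im by (rule ip_basis)
    finally show ?thesis unfolding S_def .
  qed
  have t0: "t \<ge> 0" unfolding t_def edist_def by (rule enorm_nonneg)
  have e1: "p^2 + p*q + q^2 = 2"
  proof -
    have "ip (2*m) u u - 2 * ip (2*m) u v + ip (2*m) v v = 2"
      using ab unfolding uv[symmetric] ip_diff_diff .
    then show ?thesis unfolding sq Fu by (simp add: algebra_simps)
  qed
  have e2: "p^2 + p*r + r^2 = 1 - s i + S / 2"
  proof -
    have "ip (2*m) u u - 2 * ip (2*m) w u + ip (2*m) w w = 1 - s i + S / 2"
      using ac unfolding uw[symmetric] ip_diff_diff ip_sym[of _ u w] .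
    then show ?thesis unfolding sq Fu by (simp add: algebra_simps)
  qed
  have e3: "q^2 + q*r + r^2 = 1 - s i + S / 2"
  proof -
    have "ip (2*m) v v - 2 * ip (2*m) v w + ip (2*m) w w = 1 - s i + S / 2"
      using bc unfolding vw[symmetric] ip_diff_diff .
    then show ?thesis unfolding sq Fu by (simp add: algebra_simps)
  qed
  have "(p - q) * (p + q + r) = (p^2 + p*r + r^2) - (q^2 + q*r + r^2)"
    by (simp add: power2_eq_square algebra_simps)
  also have "\<dots> = 0" using e2 e3 by simp
  finally have "(p - q) * (p + q + r) = 0" .
  then have pq: "p = q" using pp by simp
  have p23: "p^2 = 2/3" using e1 pq by (simp add: power2_eq_square)
  have psq: "p = sqrt (2/3)" using real_sqrt_unique[OF p23] pp by simp
  have "(2*r + p)^2 = 4 * (p^2 + p*r + r^2) - 3 * p^2"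
    by (simp add: power2_eq_square algebra_simps)
  also have "\<dots> = 4 * (1 - s i + S / 2) - 3 * (2/3)" using e2 p23 by (metis (no_types))
  also have "\<dots> = 2 * t^2" unfolding tt by simp
  finally have "sqrt ((2*r + p)^2) = sqrt (2 * t^2)" by simp
  also have "\<dots> = sqrt 2 * t" using t0 by (simp add: real_sqrt_mult)
  finally have "2*r + p = sqrt 2 * t" using pp by simp
  then have rr: "r = (sqrt 2 * t - sqrt (2/3)) / 2" using psq by simp
  show "edist (2*m) (basis (2*i)) x = sqrt (2/3)" using psq unfolding p_def u_def a_def edist_def .
  show "edist (2*m) (basis (2*i+1)) x = sqrt (2/3)" using psq pq unfolding q_def v_def b_def edist_def by simp
  show "edist (2*m) x (split m s) = (sqrt 2 * edist m (basis i) s - sqrt (2/3)) / 2"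
    using rr edist_sym[of "2*m" x "split m s"] unfolding r_def w_def c_def t_def by (simp add: edist_def)
qed


definition winv :: "stree \<Rightarrow> bool" where
  "winv T \<longleftrightarrow> finite (edges T) \<and> edges T \<subseteq> verts T \<times> verts T"

definition orient :: "stree \<Rightarrow> bool" where
  "orient T \<longleftrightarrow> (\<forall>u v. (u, v) \<in> edges T \<longrightarrow>
     (\<exists>a b. u = Inr a \<and> v = Inr b) \<or> (\<exists>i j. u = Inl i \<and> v = Inr j))"

definition ss :: "stree \<Rightarrow> (vtx \<times> vtx) set" where
  "ss T = {(Inr a, Inr b) | a b. (Inr a, Inr b) \<in> edges T}"

definition elen :: "stree \<Rightarrow> vtx \<times> vtx \<Rightarrow> real" where
  "elen T e = edist (dim T) (vpos T (fst e)) (vpos T (snd e))"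

lemma cost_alt: "cost T = sum (elen T) (edges T)"
  unfolding cost_def elen_def by (intro sum.cong) auto

lemma verts_iff[simp]: "Inl i \<in> verts T \<longleftrightarrow> i < dim T" "Inr j \<in> verts T \<longleftrightarrow> j < nst T"
  unfolding verts_def by auto

lemma sadj_lemma:
  assumes "terminals_leaves T" "i < dim T"
  shows "sadj T i < nst T" "\<And>v. adj T (Inl i) v \<longleftrightarrow> v = Inr (sadj T i)"
proof -
  obtain j where j: "j < nst T" "\<And>v. adj T (Inl i) v \<longleftrightarrow> v = Inr j"
    using assms unfolding terminals_leaves_def by blast
  have "sadj T i = j" unfolding sadj_def
    by (rule the_equality) (use j in auto)
  then show "sadj T i < nst T" "\<And>v. adj T (Inl i) v \<longleftrightarrow> v = Inr (sadj T i)" using j by auto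
qed

lemma decomp:
  assumes W: "winv T" and O: "orient T" and L: "terminals_leaves T"
  shows "cost T = sum (elen T) (ss T) + (\<Sum>i<dim T. edist (dim T) (basis i) (spt T (sadj T i)))"
proof -
  define E1 :: "(vtx \<times> vtx) set" where "E1 = (\<lambda>i. (Inl i, Inr (sadj T i))) ` {..<dim T}"
  have eq: "edges T = ss T \<union> E1"
  proof
    show "edges T \<subseteq> ss T \<union> E1"
    proof
      fix e assume e: "e \<in> edges T"
      obtain u v where uv: "e = (u, v)" by (cases e)
      from O e uv have "(\<exists>a b. u = Inr a \<and> v = Inr b) \<or> (\<exists>i j. u = Inl i \<and> v = Inr j)"
        unfolding orient_def by blast
      then show "e \<in> ss T \<union> E1"
      proof
        assume "\<exists>a b. u = Inr a \<and> v = Inr b" then show ?thesis using e uv unfolding ss_def by blast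
      next
        assume "\<exists>i j. u = Inl i \<and> v = Inr j"
        then obtain i j where ij: "u = Inl i" "v = Inr j" by blast
        have "i < dim T" using W e uv ij unfolding winv_def by auto
        moreover have "adj T (Inl i) (Inr j)" using e uv ij unfolding adj_def by auto
        ultimately have "j = sadj T i" using sadj_lemma[OF L] by blast
        then show ?thesis using uv ij \<open>i < dim T\<close> unfolding E1_def by blast
      qed
    qed
  next
    show "ss T \<union> E1 \<subseteq> edges T"
    proof
      fix e assume "e \<in> ss T \<union> E1"
      then show "e \<in> edges T"
      proof
        assume "e \<in> ss T" then show ?thesis unfolding ss_def by blast
      next
        assume "e \<in> E1"
        then obtain i where i: "i < dim T" "e = (Inl i, Inr (sadj T i))" unfolding E1_def by blast
        then have "adj T (Inl i) (Inr (sadj T i))" using sadj_lemma[OF L] by blast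
        moreover have "(Inr (sadj T i), Inl i) \<notin> edges T" using O unfolding orient_def by blast
        ultimately show ?thesis using i unfolding adj_def by blast
      qed
    qed
  qed
  have fin: "finite (edges T)" using W unfolding winv_def by blast
  have "cost T = sum (elen T) (ss T) + sum (elen T) E1"
    unfolding cost_alt eq
  proof (rule sum.union_disjoint)
    show "finite (ss T)" using fin unfolding ss_def by (rule rev_finite_subset) blast
    show "finite E1" unfolding E1_def by simp
    show "ss T \<inter> E1 = {}" unfolding ss_def E1_def by blast
  qed
  also have "sum (elen T) E1 = (\<Sum>i<dim T. edist (dim T) (basis i) (spt T (sadj T i)))"
    unfolding E1_def by (subst sum.reindex) (auto simp: inj_on_def elen_def vpos_def)
  finally show ?thesis .
qed


lemma doubling_struct:
  assumes W: "winv T" and D: "is_doubling T T'"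
  shows "winv T'" "orient T'"
    "cost T' = sum (elen T) (ss T) / sqrt 2
       + (\<Sum>i<dim T. 3/2 * sqrt (2/3) + edist (dim T) (basis i) (spt T (sadj T i)) / sqrt 2)"
proof -
  define m where "m = dim T"
  define N where "N = nst T"
  have L: "terminals_leaves T" using D unfolding is_doubling_def by blast
  have dim': "dim T' = 2*m" and nst': "nst T' = N + m" using D unfolding is_doubling_def m_def N_def by auto
  have sptS: "\<And>j. j < N \<Longrightarrow> spt T' j = split m (spt T j)" using D unfolding is_doubling_def m_def N_def by auto
  have ferm: "\<And>i. i < m \<Longrightarrow> fermat_point (2*m) (basis (2 * i)) (basis (2 * i + 1))
                  (split m (spt T (sadj T i))) (spt T' (N + i))"
    using D dim' unfolding is_doubling_def m_def N_def by auto
  have sadjN: "\<And>i. i < m \<Longrightarrow> sadj T i < N" using sadj_lemma[OF L] unfolding m_def N_def by blast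
  define E1 :: "(vtx \<times> vtx) set" where "E1 = (\<lambda>i. (Inl (2*i), Inr (N+i))) ` {..<m}"
  define E2 :: "(vtx \<times> vtx) set" where "E2 = (\<lambda>i. (Inl (2*i+1), Inr (N+i))) ` {..<m}"
  define E3 :: "(vtx \<times> vtx) set" where "E3 = (\<lambda>i. (Inr (N+i), Inr (sadj T i))) ` {..<m}"
  have eq: "edges T' = ss T \<union> E1 \<union> E2 \<union> E3"
    using D unfolding is_doubling_def ss_def E1_def E2_def E3_def m_def N_def by blast
  have fin: "finite (edges T)" and sub: "edges T \<subseteq> verts T \<times> verts T" using W unfolding winv_def by auto
  have finS: "finite (ss T)" using fin unfolding ss_def by (rule rev_finite_subset) blast
  have ssN: "\<And>a b. (Inr a, Inr b) \<in> ss T \<Longrightarrow> a < N \<and> b < N"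
    using sub unfolding ss_def N_def by auto
  have ssE: "\<And>e. e \<in> ss T \<Longrightarrow> \<exists>a b. e = (Inr a, Inr b) \<and> a < N \<and> b < N"
    using ssN unfolding ss_def by blast
  show "winv T'"
    unfolding winv_def eq
  proof
    show "finite (ss T \<union> E1 \<union> E2 \<union> E3)" using finS unfolding E1_def E2_def E3_def by simp
    show "ss T \<union> E1 \<union> E2 \<union> E3 \<subseteq> verts T' \<times> verts T'"
    proof
      fix e assume "e \<in> ss T \<union> E1 \<union> E2 \<union> E3"
      then consider "e \<in> ss T" | "e \<in> E1" | "e \<in> E2" | "e \<in> E3" by blast
      then show "e \<in> verts T' \<times> verts T'"
      proof cases
        case 1 then show ?thesis using ssE nst' by fastforce
      next
        case 2 then show ?thesis using dim' nst' unfolding E1_def by auto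
      next
        case 3 then show ?thesis using dim' nst' unfolding E2_def by auto
      next
        case 4 then show ?thesis using nst' sadjN unfolding E3_def by fastforce
      qed
    qed
  qed
  show "orient T'"
    unfolding orient_def eq using ssE unfolding E1_def E2_def E3_def by blast
  have d12: "(ss T \<union> E1) \<inter> E2 = {}" unfolding ss_def E1_def E2_def by (auto; presburger)
  have d3: "(ss T \<union> E1 \<union> E2) \<inter> E3 = {}" using ssN unfolding ss_def E1_def E2_def E3_def by force
  have "cost T' = sum (elen T') (ss T) + sum (elen T') E1 + sum (elen T') E2 + sum (elen T') E3"
    unfolding cost_alt eq
    by (subst sum.union_disjoint, use finS d3 in \<open>auto simp: E1_def E2_def E3_def\<close>,
        subst sum.union_disjoint, use finS d12 in \<open>auto simp: E1_def E2_def\<close>,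
        subst sum.union_disjoint, use finS in \<open>auto simp: ss_def E1_def\<close>)
  also have "sum (elen T') (ss T) = sum (elen T) (ss T) / sqrt 2"
    unfolding sum_divide_distrib
  proof (rule sum.cong)
    fix e assume "e \<in> ss T"
    then obtain a b where ab: "e = (Inr a, Inr b)" "a < N" "b < N" using ssE by blast
    show "elen T' e = elen T e / sqrt 2"
      using ab sptS edist_split unfolding elen_def vpos_def dim' m_def by simp
  qed simp
  also have "sum (elen T') E1 = (\<Sum>i<m. sqrt (2/3))"
    unfolding E1_def
    by (subst sum.reindex) (auto simp: inj_on_def elen_def vpos_def dim' fermat_lengths(1)[OF _ ferm])
  also have "sum (elen T') E2 = (\<Sum>i<m. sqrt (2/3))"
    unfolding E2_def
  proof (subst sum.reindex)
    show "inj_on (\<lambda>i. (Inl (2*i+1), Inr (N + i)) :: vtx \<times> vtx) {..<m}" by (auto simp: inj_on_def)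
    show "sum (elen T' \<circ> (\<lambda>i. (Inl (2*i+1), Inr (N + i)))) {..<m} = (\<Sum>i<m. sqrt (2/3))"
    proof (rule sum.cong)
      fix i assume "i \<in> {..<m}"
      then have i: "i < m" by simp
      have "elen T' (Inl (2*i+1), Inr (N + i)) = edist (2*m) (basis (2*i+1)) (spt T' (N+i))"
        unfolding elen_def vpos_def dim' by simp
      then show "(elen T' \<circ> (\<lambda>i. (Inl (2*i+1), Inr (N + i)))) i = sqrt (2/3)"
        using fermat_lengths(2)[OF i ferm[OF i]] by simp
    qed simp
  qed
  also have "sum (elen T') E3 = (\<Sum>i<m. (sqrt 2 * edist m (basis i) (spt T (sadj T i)) - sqrt (2/3)) / 2)"
    unfolding E3_def
  proof (subst sum.reindex)
    show "inj_on (\<lambda>i. (Inr (N + i), Inr (sadj T i)) :: vtx \<times> vtx) {..<m}" by (auto simp: inj_on_def)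
    show "sum (elen T' \<circ> (\<lambda>i. (Inr (N + i), Inr (sadj T i)))) {..<m} =
      (\<Sum>i<m. (sqrt 2 * edist m (basis i) (spt T (sadj T i)) - sqrt (2 / 3)) / 2)"
    proof (rule sum.cong)
      fix i assume "i \<in> {..<m}"
      then have i: "i < m" by simp
      show "(elen T' \<circ> (\<lambda>i. (Inr (N + i), Inr (sadj T i)))) i =
         (sqrt 2 * edist m (basis i) (spt T (sadj T i)) - sqrt (2 / 3)) / 2"
        using fermat_lengths(3)[OF i ferm[OF i]] sptS[OF sadjN[OF i]]
        unfolding elen_def vpos_def dim' by simp
    qed simp
  qed
  finally have "cost T' = sum (elen T) (ss T) / sqrt 2 +
    (\<Sum>i<m. sqrt (2/3) + sqrt (2/3) + (sqrt 2 * edist m (basis i) (spt T (sadj T i)) - sqrt (2/3)) / 2)"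
    by (simp add: sum.distrib)
  also have "(\<Sum>i<m. sqrt (2/3) + sqrt (2/3) + (sqrt 2 * edist m (basis i) (spt T (sadj T i)) - sqrt (2/3)) / 2)
     = (\<Sum>i<m. 3/2 * sqrt (2/3) + edist m (basis i) (spt T (sadj T i)) / sqrt 2)"
  proof (rule sum.cong)
    fix i
    have "sqrt 2 / 2 = 1 / sqrt 2" by (simp add: field_simps)
    then show "sqrt (2/3) + sqrt (2/3) + (sqrt 2 * edist m (basis i) (spt T (sadj T i)) - sqrt (2/3)) / 2
      = 3/2 * sqrt (2/3) + edist m (basis i) (spt T (sadj T i)) / sqrt 2"
      by (simp add: field_simps)
  qed simp
  finally show "cost T' = sum (elen T) (ss T) / sqrt 2
       + (\<Sum>i<dim T. 3/2 * sqrt (2/3) + edist (dim T) (basis i) (spt T (sadj T i)) / sqrt 2)"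
    unfolding m_def .
qed


lemma cost_rec:
  assumes W: "winv T" and O: "orient T" and D: "is_doubling T T'"
  shows "cost T' = cost T / sqrt 2 + real (dim T) * (3/2 * sqrt (2/3))"
proof -
  have L: "terminals_leaves T" using D unfolding is_doubling_def by blast
  show ?thesis
    unfolding doubling_struct(3)[OF W D] decomp[OF W O L]
    by (simp add: sum.distrib add_divide_distrib sum_divide_distrib)
qed

lemma limit_part:
  fixes c :: "nat \<Rightarrow> real" and d :: nat and K :: real
  assumes d: "d \<ge> 1"
    and rec: "\<And>k. c (Suc (Suc k)) = c (Suc k) / sqrt 2 + real (2^(Suc k) * d) * K"
  shows "(\<lambda>k. c k / ((real (2^k * d) - 1) * sqrt 2)) \<longlonglongrightarrow> (K / 2) / (1 - 1 / (2 * sqrt 2)) / sqrt 2"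
proof -
  define n where "n k = real (2^(Suc k) * d)" for k
  define a where "a k = c (Suc k) / n k" for k
  define \<rho> :: real where "\<rho> = 1 / (2 * sqrt 2)"
  define A where "A = (K / 2) / (1 - \<rho>)"
  have s2: "sqrt 2 > 1" by simp
  have s22: "2 * sqrt 2 > 1" using s2 by linarith
  have rho: "0 < \<rho>" "\<rho> < 1" unfolding \<rho>_def using s22 by (auto simp: field_simps)
  have n2: "n k \<ge> 2" for k
  proof -
    have "(2::real) ^ k \<ge> 1" by simp
    then have "(2::real) ^ Suc k \<ge> 2" by simp
    moreover have "real d \<ge> 1" using d by simp
    ultimately have "2 ^ Suc k * real d \<ge> 2 * 1" by (intro mult_mono) auto
    then show ?thesis unfolding n_def by simp
  qed
  have nS: "n (Suc k) = 2 * n k" for k unfolding n_def by simp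
  have aS: "a (Suc k) = \<rho> * a k + K / 2" for k
  proof -
    have "a (Suc k) = (c (Suc k) / sqrt 2 + n k * K) / (2 * n k)"
      unfolding a_def nS rec n_def by simp
    also have "\<dots> = c (Suc k) / sqrt 2 / (2 * n k) + n k * K / (2 * n k)"
      by (rule add_divide_distrib)
    also have "c (Suc k) / sqrt 2 / (2 * n k) = \<rho> * a k" unfolding a_def \<rho>_def by simp
    also have "n k * K / (2 * n k) = K / 2" using n2[of k] by simp
    finally show ?thesis .
  qed
  have Afix: "A = \<rho> * A + K / 2" unfolding A_def using rho by (simp add: field_simps)
  have aform: "a k = A + (a 0 - A) * \<rho> ^ k" for k
  proof (induction k)
    case 0 then show ?case by simp
  next
    case (Suc k)
    have "a (Suc k) = \<rho> * (A + (a 0 - A) * \<rho> ^ k) + K / 2" using aS Suc by simp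
    also have "\<dots> = (\<rho> * A + K / 2) + (a 0 - A) * \<rho> ^ Suc k" by (simp add: algebra_simps)
    finally show ?case using Afix by simp
  qed
  have "(\<lambda>k. A + (a 0 - A) * \<rho> ^ k) \<longlonglongrightarrow> A + (a 0 - A) * 0"
    by (intro tendsto_intros LIMSEQ_power_zero) (use rho in simp)
  moreover have "(\<lambda>k. A + (a 0 - A) * \<rho> ^ k) = a" using aform by (intro ext) (rule sym)
  ultimately have alim: "a \<longlonglongrightarrow> A + (a 0 - A) * 0" by simp
  have bnd: "0 \<le> 1 / (n k - 1) \<and> 1 / (n k - 1) \<le> (1/2::real) ^ k" for k
  proof -
    have "n k = 2 * 2^k * real d" unfolding n_def by simp
    also have "\<dots> \<ge> 2 * 2^k" using d by simp
    finally have "n k \<ge> 2 * 2 ^ k" .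
    moreover have "(2::real) ^ k \<ge> 1" by simp
    ultimately have "n k - 1 \<ge> 2 ^ k" by linarith
    moreover have "(0::real) < 2 ^ k" by simp
    ultimately have pos: "0 < (n k - 1) * 2 ^ k" by (intro mult_pos_pos) linarith+
    have "1 / (n k - 1) \<le> 1 / 2 ^ k" by (rule divide_left_mono[OF \<open>n k - 1 \<ge> 2 ^ k\<close> _ pos]) simp
    then show ?thesis using n2[of k] by (simp add: power_one_over)
  qed
  have inv0: "(\<lambda>k. 1 / (n k - 1)) \<longlonglongrightarrow> 0"
  proof (rule tendsto_sandwich[of "\<lambda>k. 0" _ _ "\<lambda>k. (1/2::real) ^ k"])
    show "\<forall>\<^sub>F k in sequentially. 0 \<le> 1 / (n k - 1)" using bnd by simp
    show "\<forall>\<^sub>F k in sequentially. 1 / (n k - 1) \<le> (1/2::real) ^ k" using bnd by simp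
    show "(\<lambda>k. (1/2::real) ^ k) \<longlonglongrightarrow> 0" by (rule LIMSEQ_power_zero) simp
  qed simp
  have "(\<lambda>k. a k * (1 + 1 / (n k - 1)) / sqrt 2) \<longlonglongrightarrow> (A + (a 0 - A) * 0) * (1 + 0) / sqrt 2"
    by (intro tendsto_intros alim inv0) simp
  moreover have "a k * (1 + 1 / (n k - 1)) / sqrt 2 = c (Suc k) / ((real (2^(Suc k) * d) - 1) * sqrt 2)" for k
  proof -
    have "n k - 1 > 0" "n k > 0" using n2[of k] by auto
    then have "1 + 1 / (n k - 1) = n k / (n k - 1)" by (simp add: field_simps)
    moreover have "c (Suc k) / n k * (n k / (n k - 1)) = c (Suc k) / (n k - 1)" using \<open>n k > 0\<close> by simp
    ultimately show ?thesis unfolding a_def n_def by simp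
  qed
  ultimately have "(\<lambda>k. c (Suc k) / ((real (2^(Suc k) * d) - 1) * sqrt 2)) \<longlonglongrightarrow> A / sqrt 2"
    by simp
  then show ?thesis unfolding A_def \<rho>_def by (rule LIMSEQ_imp_Suc)
qed


lemma const_eq:
  "(3/2 * sqrt (2/3)) / 2 / (1 - 1 / (2 * sqrt 2)) / sqrt 2 = sqrt 3 / (sqrt 2 * (2 * sqrt 2 - 1))"
proof -
  have s2: "sqrt 2 * sqrt 2 = (2::real)" by simp
  have s3: "sqrt 3 * sqrt 3 = (3::real)" by simp
  have K: "3/2 * sqrt (2/3) = sqrt 3 / sqrt 2"
  proof -
    have "3/2 * sqrt (2/3) = 3/2 * (sqrt 2 / sqrt 3)" by (simp add: real_sqrt_divide)
    also have "\<dots> = (sqrt 3 * sqrt 3) / 2 * (sqrt 2 / sqrt 3)" using s3 by simp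
    also have "\<dots> = sqrt 3 * sqrt 2 / 2" by (simp only: times_divide_eq_left times_divide_eq_right) (simp add: field_simps)
    also have "\<dots> = sqrt 3 / sqrt 2" by (simp add: field_simps)
    finally show ?thesis .
  qed
  have "sqrt 2 > (1::real)" by simp
  then have g: "2 * sqrt 2 - 1 > 0" by linarith
  have "1 - 1 / (2 * sqrt 2) = (2 * sqrt 2 - 1) / (2 * sqrt 2)" by (simp add: field_simps)
  then show ?thesis unfolding K using g by (simp add: field_simps)
qed

theorem mainTheorem13:
  fixes d :: nat and T :: "nat \<Rightarrow> stree"
  assumes "d \<ge> 1"
    and "is_steiner_tree (T 0)" and "dim (T 0) = d"
    and "\<forall>k. is_doubling (T k) (T (Suc k))"
    and "convergent (\<lambda>k. steiner_ratio (T k))"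
  shows "(\<lambda>k. steiner_ratio (T k)) \<longlonglongrightarrow> sqrt 3 / (sqrt 2 * (2 * sqrt 2 - 1))"
proof -
  have D: "\<And>k. is_doubling (T k) (T (Suc k))" using assms(4) by blast
  have W0: "winv (T 0)" using assms(2) unfolding is_steiner_tree_def winv_def by blast
  have W: "winv (T k)" for k
  proof (induction k)
    case 0 then show ?case by (rule W0)
  next
    case (Suc k) then show ?case using doubling_struct(1)[OF _ D] by blast
  qed
  have O: "orient (T (Suc k))" for k using doubling_struct(2)[OF W D] .
  have dimk: "dim (T k) = 2^k * d" for k
  proof (induction k)
    case 0 then show ?case using assms(3) by simp
  next
    case (Suc k) then show ?case using D[of k] unfolding is_doubling_def by simp
  qed
  have rec: "cost (T (Suc (Suc k))) = cost (T (Suc k)) / sqrt 2 + real (2^(Suc k) * d) * (3/2 * sqrt (2/3))" for k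
    using cost_rec[OF W O D] dimk by simp
  have "(\<lambda>k. cost (T k) / ((real (2^k * d) - 1) * sqrt 2)) \<longlonglongrightarrow>
      (3/2 * sqrt (2/3)) / 2 / (1 - 1 / (2 * sqrt 2)) / sqrt 2"
    by (rule limit_part[OF assms(1) rec])
  moreover have "(\<lambda>k. steiner_ratio (T k)) = (\<lambda>k. cost (T k) / ((real (2^k * d) - 1) * sqrt 2))"
    unfolding steiner_ratio_def dimk by simp
  ultimately show ?thesis unfolding const_eq by simp
qed

end
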